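(* Let $X$ be a real Hilbert space and $I$ either $[0,T]$ ($T>0$) or $[0,+\infty)$. Assume: $K\subset X$ is a nonempty closed convex cone; $A:X\to X$ satisfies $(Au-Av,u-v)_X\ge m_A\|u-v\|_X^2$ and $\|Au-Av\|_X\le L_A\|u-v\|_X$ for all $u,v\in X$, with $m_A,L_A>0$; $f\in C(I;X)$; $\mathcal{S}:C(I;X)\to C(I;X)$ is a history-dependent operator; $j:K\to\mathbb{R}$ is a convex, positively homogeneous, Lipschitz continuous function. Then there exists a unique function $u\in C(I;K)$ such that $$-u(t)\in \mathrm{N}_{C(t)}\big(Au(t)+\mathcal{S}u(t)\big)\quad\forall\,t\in I.$$
   Context: $\mathcal{S}$ is history-dependent if for every compact $\mathcal J\subset I$ there is $L_{\mathcal J}>0$ with $\|\mathcal{S}u_1(t)-\mathcal{S}u_2(t)\|_X\le L_{\mathcal J}\int_0^t\|u_1(s)-u_2(s)\|_X ds$ for all $u_1,u_2\in C(I;X)$, $t\in\mathcal J$. Define $J:X\to(-\infty,+\infty]$ by $J(v)=j(v)$ if $v\in K$, $J(v)=+\infty$ otherwise; $C=\{\xi\in X:J(v)\ge(\xi,v)_X\ \forall v\in X\}$ and $C(t)=f(t)-C$ for $t\in I$. For a nonempty closed convex $D\subset X$, $\mathrm{N}_D(x)=\{\xi:(\xi,w-x)_X\le0\ \forall w\in D\}$ if $x\in D$, $\emptyset$ otherwise. *)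

theory Defs
  imports "HOL-Analysis.Analysis"
begin

definition Jext :: "'a set \<Rightarrow> ('a \<Rightarrow> real) \<Rightarrow> 'a \<Rightarrow> ereal" where
  "Jext K j v = (if v \<in> K then ereal (j v) else PInfty)"

definition Cset :: "'a::real_inner set \<Rightarrow> ('a \<Rightarrow> real) \<Rightarrow> 'a set" where
  "Cset K j = {\<xi>. \<forall>v. Jext K j v \<ge> ereal (inner \<xi> v)}"

definition Ct :: "'a::real_inner set \<Rightarrow> ('a \<Rightarrow> real) \<Rightarrow> (real \<Rightarrow> 'a) \<Rightarrow> real \<Rightarrow> 'a set" where
  "Ct K j f t = (\<lambda>\<xi>. f t - \<xi>) ` Cset K j"

definition NormalCone :: "'a::real_inner set \<Rightarrow> 'a \<Rightarrow> 'a set" where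
  "NormalCone D x = (if x \<in> D then {\<xi>. \<forall>w\<in>D. inner \<xi> (w - x) \<le> 0} else {})"

definition history_dependent :: "real set \<Rightarrow> ((real \<Rightarrow> 'a::real_normed_vector) \<Rightarrow> (real \<Rightarrow> 'a)) \<Rightarrow> bool" where
  "history_dependent I S \<longleftrightarrow>
     (\<forall>J. compact J \<and> J \<subseteq> I \<longrightarrow>
        (\<exists>L>0. \<forall>u1 u2. continuous_on I u1 \<and> continuous_on I u2 \<longrightarrow>
           (\<forall>t\<in>J. norm (S u1 t - S u2 t) \<le> L * integral {0..t} (\<lambda>s. norm (u1 s - u2 s)))))"

end

theory Submission
  imports Defs
begin

lemma parallelogram_aux:
  fixes a x z :: "'b::real_inner"
  shows "(norm (x - z))\<^sup>2 + (norm (2 *\<^sub>R a - x - z))\<^sup>2 = 2 * (norm (a - x))\<^sup>2 + 2 * (norm (a - z))\<^sup>2"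
  unfolding power2_norm_eq_inner
  by (simp add: inner_diff_left inner_diff_right inner_add_left inner_add_right inner_commute algebra_simps)

lemma hilbert_proj:
  fixes S :: "'b::{real_inner,complete_space} set"
  assumes cl: "closed S" and cv: "convex S" and ne: "S \<noteq> {}"
  shows "\<exists>p\<in>S. \<forall>y\<in>S. inner (a - p) (y - p) \<le> 0"
proof -
  define d where "d = infdist a S"
  have d0: "d \<ge> 0" unfolding d_def by (rule infdist_nonneg)
  have dle: "d \<le> dist a y" if "y \<in> S" for y unfolding d_def using that by (rule infdist_le)
  have "\<exists>y\<in>S. dist a y < d + 1 / real (Suc n)" for n
  proof -
    have "(INF y\<in>S. dist a y) < d + 1 / real (Suc n)"
      using ne by (simp add: d_def infdist_notempty)
    then show ?thesis using ne by (subst (asm) cINF_less_iff) auto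
  qed
  then obtain y where yS: "\<And>n. y n \<in> S" and yd: "\<And>n. dist a (y n) < d + 1 / real (Suc n)"
    by metis
  have mid: "(norm (x - z))\<^sup>2 \<le> 2 * (dist a x)\<^sup>2 + 2 * (dist a z)\<^sup>2 - 4 * d\<^sup>2" if "x \<in> S" "z \<in> S" for x z
  proof -
    have "(1/2) *\<^sub>R x + (1/2) *\<^sub>R z \<in> S" using cv that by (simp add: convex_def)
    then have "d \<le> dist a ((1/2) *\<^sub>R x + (1/2) *\<^sub>R z)" by (rule dle)
    also have "dist a ((1/2) *\<^sub>R x + (1/2) *\<^sub>R z) = norm (2 *\<^sub>R a - x - z) / 2"
    proof -
      have "2 *\<^sub>R a - x - z = 2 *\<^sub>R (a - ((1/2) *\<^sub>R x + (1/2) *\<^sub>R z))" by (simp add: algebra_simps)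
      then show ?thesis by (simp add: dist_norm)
    qed
    finally have "2 * d \<le> norm (2 *\<^sub>R a - x - z)" by simp
    then have "(2*d)\<^sup>2 \<le> (norm (2 *\<^sub>R a - x - z))\<^sup>2" using d0 by (intro power_mono) auto
    then show ?thesis using parallelogram_aux[of x z a] by (simp add: dist_norm power_mult_distrib)
  qed
  have ysq: "(dist a (y n))\<^sup>2 \<le> d\<^sup>2 + (2*d+1) * (1 / real (Suc n))" for n
  proof -
    have e: "0 < 1 / real (Suc n)" "1 / real (Suc n) \<le> 1" by auto
    have "(dist a (y n))\<^sup>2 \<le> (d + 1 / real (Suc n))\<^sup>2"
      using yd[of n] by (intro power_mono) auto
    also have "\<dots> = d\<^sup>2 + 2*d*(1 / real (Suc n)) + (1 / real (Suc n)) * (1 / real (Suc n))"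
      by (simp add: power2_eq_square algebra_simps)
    also have "\<dots> \<le> d\<^sup>2 + 2*d*(1 / real (Suc n)) + 1 * (1 / real (Suc n))"
      using e by (intro add_left_mono mult_right_mono) auto
    finally show ?thesis by (simp add: algebra_simps)
  qed
  have yy: "(norm (y n - y m))\<^sup>2 \<le> 2*(2*d+1) * (1 / real (Suc n) + 1 / real (Suc m))" for n m
  proof -
    have "2*(2*d+1) * (1 / real (Suc n) + 1 / real (Suc m)) = 2*((2*d+1) * (1 / real (Suc n))) + 2*((2*d+1) * (1 / real (Suc m)))"
      by (simp add: algebra_simps)
    then show ?thesis using mid[OF yS yS, of n m] ysq[of n] ysq[of m] by linarith
  qed
  have "Cauchy y"
  proof (rule metric_CauchyI)
    fix e :: real assume e: "e > 0"
    obtain N where N: "4*(2*d+1) / e\<^sup>2 < real N" using reals_Archimedean2 by blast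
    have N': "4*(2*d+1) / real (Suc N) < e\<^sup>2"
    proof -
      have ep: "e\<^sup>2 > 0" using e by simp
      have h1: "4*(2*d+1) < real N * e\<^sup>2" using N ep by (simp add: pos_divide_less_eq)
      have h2: "4*(2*d+1) < e\<^sup>2 * real (Suc N)" 
      proof -
        have "e\<^sup>2 * real (Suc N) = e\<^sup>2 + real N * e\<^sup>2" by (simp add: algebra_simps)
        then show ?thesis using h1 ep by linarith
      qed
      show ?thesis using h2 by (simp add: pos_divide_less_eq)
    qed
    show "\<exists>M. \<forall>m\<ge>M. \<forall>n\<ge>M. dist (y m) (y n) < e"
    proof (intro exI allI impI)
      fix m n assume mn: "m \<ge> N" "n \<ge> N"
      have "1 / real (Suc m) \<le> 1 / real (Suc N)" "1 / real (Suc n) \<le> 1 / real (Suc N)"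
        using mn by (auto simp: frac_le)
      then have "(norm (y m - y n))\<^sup>2 \<le> 2*(2*d+1) * (2 / real (Suc N))"
      proof -
        have "1 / real (Suc m) + 1 / real (Suc n) \<le> 2 / real (Suc N)"
          using \<open>1 / real (Suc m) \<le> 1 / real (Suc N)\<close> \<open>1 / real (Suc n) \<le> 1 / real (Suc N)\<close>
        proof -
          have "2 / real (Suc N) = 1/real (Suc N) + 1/real (Suc N)" by simp
          then show ?thesis using \<open>1 / real (Suc m) \<le> 1 / real (Suc N)\<close> \<open>1 / real (Suc n) \<le> 1 / real (Suc N)\<close> by linarith
        qed
        then have "2*(2*d+1) * (1 / real (Suc m) + 1 / real (Suc n)) \<le> 2*(2*d+1) * (2 / real (Suc N))"
          using d0 by (intro mult_left_mono) auto
        then show ?thesis using yy[of m n] by linarith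
      qed
      also have "\<dots> < e\<^sup>2" using N' by simp
      finally have "(norm (y m - y n))\<^sup>2 < e\<^sup>2" .
      then show "dist (y m) (y n) < e" using e by (simp add: dist_norm power_less_imp_less_base)
    qed
  qed
  then obtain p where yp: "y \<longlonglongrightarrow> p" using Cauchy_convergent_iff convergent_def by blast
  have pS: "p \<in> S" using cl yS yp closed_sequentially by blast
  have "(\<lambda>n. dist a (y n)) \<longlonglongrightarrow> dist a p" by (intro tendsto_intros yp)
  moreover have "(\<lambda>n. d + 1 / real (Suc n)) \<longlonglongrightarrow> d + 0"
    by (intro tendsto_intros LIMSEQ_inverse_real_of_nat[unfolded inverse_eq_divide])
  ultimately have pd: "dist a p \<le> d"
    using yd by (intro LIMSEQ_le[of "\<lambda>n. dist a (y n)" _ "\<lambda>n. d + 1 / real (Suc n)"]) (auto intro: less_imp_le)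
  have "\<forall>y\<in>S. inner (a - p) (y - p) \<le> 0"
  proof (rule ballI, rule ccontr)
    fix z assume zS: "z \<in> S" and nl: "\<not> inner (a - p) (z - p) \<le> 0"
    define \<delta> where "\<delta> = inner (a - p) (z - p)"
    define w where "w = z - p"
    have \<delta>0: "\<delta> > 0" using nl \<delta>_def by simp
    have w0: "w \<noteq> 0" using \<delta>0 by (auto simp: \<delta>_def w_def)
    then have nw: "(norm w)\<^sup>2 > 0" by simp
    define t where "t = min 1 (\<delta> / (norm w)\<^sup>2)"
    have t0: "t > 0" "t \<le> 1" using \<delta>0 nw by (auto simp: t_def)
    have tw: "t * (norm w)\<^sup>2 \<le> \<delta>" using nw by (simp add: t_def min_def field_simps)
    have "(1 - t) *\<^sub>R p + t *\<^sub>R z \<in> S" using cv pS zS t0 by (simp add: convex_def)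
    moreover have "(1 - t) *\<^sub>R p + t *\<^sub>R z = p + t *\<^sub>R w" by (simp add: w_def algebra_simps)
    ultimately have "p + t *\<^sub>R w \<in> S" by simp
    then have "d \<le> dist a (p + t *\<^sub>R w)" by (rule dle)
    then have "dist a p \<le> norm ((a - p) - t *\<^sub>R w)" using pd by (simp add: dist_norm algebra_simps)
    then have "norm (a - p) \<le> norm ((a - p) - t *\<^sub>R w)" by (simp add: dist_norm)
    then have "(norm (a - p))\<^sup>2 \<le> (norm ((a - p) - t *\<^sub>R w))\<^sup>2"
      by (rule power_mono) simp
    also have "\<dots> = (norm (a - p))\<^sup>2 - 2 * t * \<delta> + t * (t * (norm w)\<^sup>2)"
      unfolding power2_norm_eq_inner \<delta>_def w_def
      by (simp add: inner_diff_left inner_diff_right inner_commute power2_eq_square algebra_simps)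
    finally have "2 * t * \<delta> \<le> t * (t * (norm w)\<^sup>2)" by simp
    then have "2 * \<delta> \<le> t * (norm w)\<^sup>2" using t0 by (simp add: mult.assoc)
    then show False using tw \<delta>0 by simp
  qed
  then show ?thesis using pS by blast
qed


definition proj :: "'b::real_inner set \<Rightarrow> 'b \<Rightarrow> 'b" where
  "proj S a = (SOME p. p \<in> S \<and> (\<forall>y\<in>S. inner (a - p) (y - p) \<le> 0))"

lemma proj_props:
  fixes S :: "'b::{real_inner,complete_space} set"
  assumes "closed S" "convex S" "S \<noteq> {}"
  shows "proj S a \<in> S" "\<And>y. y \<in> S \<Longrightarrow> inner (a - proj S a) (y - proj S a) \<le> 0"
proof -
  have "\<exists>p. p \<in> S \<and> (\<forall>y\<in>S. inner (a - p) (y - p) \<le> 0)" using hilbert_proj[OF assms] by blast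
  then have "proj S a \<in> S \<and> (\<forall>y\<in>S. inner (a - proj S a) (y - proj S a) \<le> 0)"
    unfolding proj_def by (rule someI_ex)
  then show "proj S a \<in> S" "\<And>y. y \<in> S \<Longrightarrow> inner (a - proj S a) (y - proj S a) \<le> 0" by auto
qed

lemma proj_nonexp:
  fixes S :: "'b::{real_inner,complete_space} set"
  assumes "closed S" "convex S" "S \<noteq> {}"
  shows "norm (proj S a - proj S b) \<le> norm (a - b)"
proof -
  let ?p = "proj S a" and ?q = "proj S b"
  have 1: "inner (a - ?p) (?q - ?p) \<le> 0" using proj_props[OF assms] by blast
  have 2: "inner (b - ?q) (?p - ?q) \<le> 0" using proj_props[OF assms] by blast
  have "inner (?p - ?q) (?p - ?q) \<le> inner (a - b) (?p - ?q)"
    using 1 2 by (simp add: inner_diff_left inner_diff_right inner_commute algebra_simps)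
  also have "\<dots> \<le> norm (a - b) * norm (?p - ?q)" by (rule norm_cauchy_schwarz)
  finally have "(norm (?p - ?q))\<^sup>2 \<le> norm (a - b) * norm (?p - ?q)" by (simp add: power2_norm_eq_inner)
  then show ?thesis
    by (metis (no_types, lifting) mult_le_cancel_right norm_ge_zero power2_eq_square order_less_le not_le mult_zero_right)
qed

lemma alg_contr: "(L'::real) > 0 \<Longrightarrow> n2 - 2*(m/L'\<^sup>2)*(m*n2) + (m/L'\<^sup>2)\<^sup>2*(L'\<^sup>2*n2) = (1 - m\<^sup>2/L'\<^sup>2)*n2"
  by (simp add: field_simps power2_eq_square)

lemma contr_est:
  fixes F :: "'b::real_inner \<Rightarrow> 'b"
  assumes m: "m > 0" and L: "L > 0"
    and strong: "\<And>x y. inner (F x - F y) (x - y) \<ge> m * (norm (x - y))\<^sup>2"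
    and lip: "\<And>x y. norm (F x - F y) \<le> L * norm (x - y)"
  shows "\<exists>\<rho> c. \<rho> > 0 \<and> 0 \<le> c \<and> c < 1 \<and> (\<forall>x y. norm ((x - \<rho> *\<^sub>R F x) - (y - \<rho> *\<^sub>R F y)) \<le> c * norm (x - y))"
proof -
  define L' where "L' = L + m"
  define \<rho> where "\<rho> = m / L'\<^sup>2"
  define q where "q = m\<^sup>2 / L'\<^sup>2"
  have L'0: "L' > 0" using m L by (simp add: L'_def)
  have q0: "0 < q" using m L'0 by (simp add: q_def)
  have "m < L'" using L by (simp add: L'_def)
  then have "m\<^sup>2 < L'\<^sup>2" using m by (intro power_strict_mono) auto
  then have q1: "q < 1" using L'0 by (simp add: q_def)
  define c where "c = sqrt (1 - q)"
  have c0: "0 \<le> c" "c < 1" using q0 q1 by (auto simp: c_def)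
  have \<rho>0: "\<rho> > 0" using m L'0 by (simp add: \<rho>_def)
  have c2: "c\<^sup>2 = 1 - q" using q1 unfolding c_def by (intro real_sqrt_pow2) simp
  have est: "norm ((x - \<rho> *\<^sub>R F x) - (y - \<rho> *\<^sub>R F y)) \<le> c * norm (x - y)" for x y
  proof -
    let ?d = "x - y" and ?D = "F x - F y"
    have eq: "(x - \<rho> *\<^sub>R F x) - (y - \<rho> *\<^sub>R F y) = ?d - \<rho> *\<^sub>R ?D" by (simp add: algebra_simps)
    have nD: "norm ?D \<le> L' * norm ?d"
    proof -
      have "L * norm ?d \<le> L' * norm ?d" using m by (intro mult_right_mono) (auto simp: L'_def)
      then show ?thesis using lip[of x y] by linarith
    qed
    then have "(norm ?D)\<^sup>2 \<le> (L' * norm ?d)\<^sup>2" by (intro power_mono) auto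
    then have nD2: "(norm ?D)\<^sup>2 \<le> L'\<^sup>2 * (norm ?d)\<^sup>2" by (simp add: power_mult_distrib)
    have "(norm (?d - \<rho> *\<^sub>R ?D))\<^sup>2 = (norm ?d)\<^sup>2 - 2 * \<rho> * inner ?D ?d + \<rho>\<^sup>2 * (norm ?D)\<^sup>2"
      unfolding power2_norm_eq_inner
      by (simp add: inner_diff_left inner_diff_right inner_commute power2_eq_square algebra_simps)
    also have "\<dots> \<le> (norm ?d)\<^sup>2 - 2 * \<rho> * (m * (norm ?d)\<^sup>2) + \<rho>\<^sup>2 * (L'\<^sup>2 * (norm ?d)\<^sup>2)"
    proof -
      have "2 * \<rho> * (m * (norm ?d)\<^sup>2) \<le> 2 * \<rho> * inner ?D ?d" using strong[of x y] \<rho>0 by simp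
      moreover have "\<rho>\<^sup>2 * (norm ?D)\<^sup>2 \<le> \<rho>\<^sup>2 * (L'\<^sup>2 * (norm ?d)\<^sup>2)" using nD2 by (simp add: mult_left_mono)
      ultimately show ?thesis by linarith
    qed
    also have "\<dots> = (1 - q) * (norm ?d)\<^sup>2"
      unfolding \<rho>_def q_def by (rule alg_contr[OF L'0])
    also have "\<dots> = c\<^sup>2 * (norm ?d)\<^sup>2" using c2 by simp
    also have "\<dots> = (c * norm ?d)\<^sup>2" by (rule power_mult_distrib[symmetric])
    finally have "(norm (?d - \<rho> *\<^sub>R ?D))\<^sup>2 \<le> (c * norm ?d)\<^sup>2" .
    then have "norm (?d - \<rho> *\<^sub>R ?D) \<le> c * norm ?d"
      by (rule power2_le_imp_le) (use c0 in simp)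
    then show ?thesis unfolding eq .
  qed
  show ?thesis using \<rho>0 c0 est by blast
qed

lemma VI_exists:
  fixes F :: "'b::{real_inner,complete_space} \<Rightarrow> 'b" and C :: "'b set"
  assumes C: "closed C" "convex C" "C \<noteq> {}"
    and m: "m > 0" and L: "L > 0"
    and strong: "\<And>x y. inner (F x - F y) (x - y) \<ge> m * (norm (x - y))\<^sup>2"
    and lip: "\<And>x y. norm (F x - F y) \<le> L * norm (x - y)"
  shows "\<exists>\<eta>\<in>C. \<forall>\<xi>\<in>C. inner (F \<eta>) (\<xi> - \<eta>) \<ge> 0"
proof -
  obtain \<rho> c where \<rho>: "\<rho> > 0" "0 \<le> c" "c < 1"
    and est: "\<And>x y. norm ((x - \<rho> *\<^sub>R F x) - (y - \<rho> *\<^sub>R F y)) \<le> c * norm (x - y)"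
    using contr_est[OF m L strong lip] by blast
  define T where "T x = proj C (x - \<rho> *\<^sub>R F x)" for x
  have "\<forall>x y. dist (T x) (T y) \<le> c * dist x y"
  proof (intro allI)
    fix x y
    have "dist (T x) (T y) \<le> norm ((x - \<rho> *\<^sub>R F x) - (y - \<rho> *\<^sub>R F y))"
      unfolding T_def dist_norm by (rule proj_nonexp[OF C])
    also have "\<dots> \<le> c * dist x y" using est by (simp add: dist_norm)
    finally show "dist (T x) (T y) \<le> c * dist x y" .
  qed
  then obtain x where x: "T x = x" using banach_fix_type[OF \<rho>(2,3)] by blast
  have xC: "x \<in> C" using proj_props(1)[OF C] x unfolding T_def by metis
  have "\<forall>\<xi>\<in>C. inner (F x) (\<xi> - x) \<ge> 0"
  proof
    fix \<xi> assume "\<xi> \<in> C"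
    then have "inner ((x - \<rho> *\<^sub>R F x) - x) (\<xi> - x) \<le> 0"
      using proj_props(2)[OF C, of \<xi> "x - \<rho> *\<^sub>R F x"] x unfolding T_def by simp
    then have "- \<rho> * inner (F x) (\<xi> - x) \<le> 0" by simp
    then show "inner (F x) (\<xi> - x) \<ge> 0" using \<rho>(1)
      by (simp add: zero_le_mult_iff)
  qed
  then show ?thesis using xC by blast
qed

lemma strong_surj:
  fixes A :: "'b::{real_inner,complete_space} \<Rightarrow> 'b"
  assumes m: "m > 0" and L: "L > 0"
    and strong: "\<And>x y. inner (A x - A y) (x - y) \<ge> m * (norm (x - y))\<^sup>2"
    and lip: "\<And>x y. norm (A x - A y) \<le> L * norm (x - y)"
  shows "\<exists>x. A x = y"
proof -
  obtain \<rho> c where \<rho>: "\<rho> > 0" "0 \<le> c" "c < 1"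
    and est: "\<And>x y. norm ((x - \<rho> *\<^sub>R A x) - (y - \<rho> *\<^sub>R A y)) \<le> c * norm (x - y)"
    using contr_est[OF m L strong lip] by blast
  define T where "T x = x - \<rho> *\<^sub>R (A x - y)" for x
  have "\<forall>x z. dist (T x) (T z) \<le> c * dist x z"
  proof (intro allI)
    fix x z
    have "T x - T z = (x - \<rho> *\<^sub>R A x) - (z - \<rho> *\<^sub>R A z)" by (simp add: T_def algebra_simps)
    then show "dist (T x) (T z) \<le> c * dist x z" using est[of x z] by (simp add: dist_norm)
  qed
  then obtain x where x: "T x = x" using banach_fix_type[OF \<rho>(2,3)] by blast
  then have "\<rho> *\<^sub>R (A x - y) = 0" by (simp add: T_def)
  then show ?thesis using \<rho>(1) by auto
qed


definition Cs :: "'b::real_inner set \<Rightarrow> ('b \<Rightarrow> real) \<Rightarrow> 'b set" where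
  "Cs K j = {\<xi>. \<forall>v\<in>K. inner \<xi> v \<le> j v}"

lemma Cset_eq: "Cset K j = Cs K j"
  unfolding Cset_def Cs_def Jext_def by auto

lemma Cs_closed: "closed (Cs K j)"
proof -
  have "Cs K j = (\<Inter>v\<in>K. {\<xi>. inner v \<xi> \<le> j v})" unfolding Cs_def by (auto simp: inner_commute)
  then show ?thesis by (auto intro!: closed_INT closed_halfspace_le)
qed

lemma Cs_convex:
  fixes K :: "'b::real_inner set"
  shows "convex (Cs K j)"
  unfolding convex_def Cs_def
proof (safe)
  fix x y :: 'b and u v :: real and w
  assume x: "\<forall>v\<in>K. inner x v \<le> j v" and y: "\<forall>v\<in>K. inner y v \<le> j v" and u: "0 \<le> u" "0 \<le> v" "u + v = 1" and w: "w \<in> K"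
  have "inner (u *\<^sub>R x + v *\<^sub>R y) w = u * inner x w + v * inner y w" by (simp add: inner_add_left)
  also have "\<dots> \<le> u * j w + v * j w" using x y w u by (intro add_mono mult_left_mono) auto
  also have "\<dots> = j w" using u(3) by (metis distrib_right mult_1)
  finally show "inner (u *\<^sub>R x + v *\<^sub>R y) w \<le> j w" .
qed

lemma cone_zero: "cone K \<Longrightarrow> K \<noteq> {} \<Longrightarrow> 0 \<in> K"
  unfolding cone_def by (metis all_not_in_conv order_refl scaleR_zero_left)

lemma j_zero:
  fixes j :: "'b::real_vector \<Rightarrow> real"
  assumes "\<And>c v. c > 0 \<Longrightarrow> v \<in> K \<Longrightarrow> j (c *\<^sub>R v) = c * j v" "0 \<in> K"
  shows "j 0 = 0"
  using assms(1)[of 2 0] assms(2) by simp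

lemma Cs_nonempty:
  fixes K :: "'b::{real_inner,complete_space} set" and j :: "'b \<Rightarrow> real"
  assumes K_ne: "K \<noteq> {}" and K_closed: "closed K" and K_convex: "convex K" and K_cone: "cone K"
    and j_convex: "convex_on K j"
    and j_hom: "\<And>c v. c > 0 \<Longrightarrow> v \<in> K \<Longrightarrow> j (c *\<^sub>R v) = c * j v"
    and j_cont: "continuous_on K j"
  shows "Cs K j \<noteq> {}"
proof -
  have K0: "0 \<in> K" by (rule cone_zero[OF K_cone K_ne])
  have j0: "j 0 = 0" by (rule j_zero[OF j_hom K0])
  define E :: "('b \<times> real) set" where "E = {z. fst z \<in> K \<and> j (fst z) \<le> snd z}"
  have E_eq: "E = (K \<times> UNIV) \<inter> (\<lambda>z. j (fst z) - snd z) -` {..0}" unfolding E_def by auto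
  have "continuous_on (K \<times> UNIV) (\<lambda>z. j (fst z) - snd z)"
  proof (intro continuous_intros)
    show "continuous_on (K \<times> UNIV) (\<lambda>z. j (fst z))"
      by (rule continuous_on_compose2[OF j_cont]) (auto intro: continuous_intros)
  qed
  then have E_closed: "closed E" unfolding E_eq
    by (intro continuous_closed_preimage closed_Times K_closed) auto
  have E_convex: "convex E"
    unfolding convex_def
  proof (intro allI impI ballI)
    fix x y :: "'b \<times> real" and u v :: real
    assume x: "x \<in> E" and y: "y \<in> E" and uv0: "0 \<le> u" "0 \<le> v" "u + v = 1"
    note uv = uv0
    have "u *\<^sub>R fst x + v *\<^sub>R fst y \<in> K" using x y uv K_convex unfolding E_def convex_def by auto
    moreover have "j (u *\<^sub>R fst x + v *\<^sub>R fst y) \<le> u * j (fst x) + v * j (fst y)"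
      using x y uv j_convex unfolding E_def convex_on_def by auto
    moreover have "u * j (fst x) + v * j (fst y) \<le> u * snd x + v * snd y"
      using x y uv unfolding E_def by (intro add_mono mult_left_mono) auto
    ultimately show "u *\<^sub>R x + v *\<^sub>R y \<in> E" unfolding E_def by auto
  qed
  have E_ne: "E \<noteq> {}" using K0 j0 unfolding E_def by (auto intro!: exI[of _ "(0, 0)"])
  define a :: "'b \<times> real" where "a = (0, -1)"
  obtain p where pE: "p \<in> E" and pin: "\<And>e. e \<in> E \<Longrightarrow> inner (a - p) (e - p) \<le> 0"
    using hilbert_proj[OF E_closed E_convex E_ne, of a] by blast
  define n where "n = a - p"
  have zE: "(0, 0) \<in> E" using K0 j0 unfolding E_def by auto
  have twoE: "2 *\<^sub>R p \<in> E"
  proof -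
    have "fst (2 *\<^sub>R p) \<in> K" using pE K_cone unfolding E_def cone_def by auto
    moreover have "j (fst (2 *\<^sub>R p)) = 2 * j (fst p)" using pE j_hom[of 2 "fst p"] unfolding E_def by auto
    ultimately show ?thesis using pE unfolding E_def by auto
  qed
  have "inner n (0 - p) \<le> 0" using pin[OF zE] by (simp add: n_def zero_prod_def)
  moreover have "inner n (2 *\<^sub>R p - p) \<le> 0" using pin[OF twoE] by (simp add: n_def)
  ultimately have np: "inner n p = 0" by (simp add: algebra_simps)
  have ne: "inner n e \<le> 0" if "e \<in> E" for e
    using pin[OF that] np by (simp add: n_def[symmetric] inner_diff_right)
  have aE: "a \<notin> E" using j0 unfolding E_def a_def by simp
  then have "n \<noteq> 0" using pE unfolding n_def by auto
  then have "inner n n > 0" by simp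
  moreover have "inner n a = inner n n" using np by (simp add: n_def inner_diff_right inner_diff_left)
  moreover have "inner n a = 1 + snd p" by (simp add: n_def a_def inner_prod_def)
  ultimately have pos: "1 + snd p > 0" by simp
  define \<xi> where "\<xi> = (1 / (1 + snd p)) *\<^sub>R (- fst p)"
  have "\<xi> \<in> Cs K j"
    unfolding Cs_def
  proof (intro CollectI ballI)
    fix v assume v: "v \<in> K"
    then have "(v, j v) \<in> E" unfolding E_def by simp
    from ne[OF this] have "inner (- fst p) v + (-1 - snd p) * j v \<le> 0"
      by (simp add: n_def a_def inner_prod_def)
    then have "inner (- fst p) v \<le> (1 + snd p) * j v" by (simp add: algebra_simps)
    then show "inner \<xi> v \<le> j v" using pos by (simp add: \<xi>_def field_simps)
  qed
  then show ?thesis by blast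
qed


lemma in_K:
  fixes K :: "'b::{real_inner,complete_space} set"
  assumes K_ne: "K \<noteq> {}" and K_closed: "closed K" and K_convex: "convex K" and K_cone: "cone K"
    and eta: "\<eta> \<in> Cs K j" and nc: "\<forall>\<xi>\<in>Cs K j. inner u (\<xi> - \<eta>) \<le> 0"
  shows "u \<in> K"
proof -
  define p where "p = proj K u"
  define w where "w = u - p"
  have pK: "p \<in> K" unfolding p_def by (rule proj_props(1)[OF K_closed K_convex K_ne])
  have pin: "inner w (y - p) \<le> 0" if "y \<in> K" for y
    unfolding p_def w_def by (rule proj_props(2)[OF K_closed K_convex K_ne that])
  have K0: "0 \<in> K" by (rule cone_zero[OF K_cone K_ne])
  have "2 *\<^sub>R p \<in> K" using pK K_cone unfolding cone_def by auto
  from pin[OF this] pin[OF K0] have wp: "inner w p = 0" by (simp add: algebra_simps)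
  have wv: "inner w v \<le> 0" if "v \<in> K" for v using pin[OF that] wp by (simp add: inner_diff_right)
  have "\<eta> + w \<in> Cs K j"
    unfolding Cs_def
  proof (intro CollectI ballI)
    fix v assume v: "v \<in> K"
    have "inner \<eta> v \<le> j v" using eta v unfolding Cs_def by blast
    moreover have "inner w v \<le> 0" using wv[OF v] .
    ultimately show "inner (\<eta> + w) v \<le> j v" by (simp add: inner_add_left)
  qed
  from nc[rule_format, OF this] have "inner u w \<le> 0" by simp
  moreover have "inner u w = inner w w" using wp by (simp add: w_def inner_diff_left inner_diff_right inner_commute)
  ultimately have "inner w w \<le> 0" by simp
  then have "w = 0" by (metis inner_gt_zero_iff not_le)
  then show ?thesis using pK by (simp add: w_def)
qed

definition Sol :: "'b::real_inner set \<Rightarrow> ('b \<Rightarrow> real) \<Rightarrow> ('b \<Rightarrow> 'b) \<Rightarrow> 'b \<Rightarrow> 'b \<Rightarrow> bool" where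
  "Sol K j A g u \<longleftrightarrow> u \<in> K \<and> g - A u \<in> Cs K j \<and> (\<forall>\<xi>\<in>Cs K j. inner u (\<xi> - (g - A u)) \<le> 0)"

lemma pw_lip:
  fixes A :: "'b::real_inner \<Rightarrow> 'b"
  assumes mA: "mA > 0"
    and A_strong: "\<And>u v. inner (A u - A v) (u - v) \<ge> mA * (norm (u - v))\<^sup>2"
    and s1: "Sol K j A g1 u1" and s2: "Sol K j A g2 u2"
  shows "mA * norm (u1 - u2) \<le> norm (g1 - g2)"
proof -
  let ?e1 = "g1 - A u1" and ?e2 = "g2 - A u2"
  have 1: "inner u1 (?e2 - ?e1) \<le> 0" using s1 s2 unfolding Sol_def by blast
  have 2: "inner u2 (?e1 - ?e2) \<le> 0" using s1 s2 unfolding Sol_def by blast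
  have "inner (u1 - u2) (A u1 - A u2) \<le> inner (u1 - u2) (g1 - g2)"
    using 1 2 by (simp add: inner_diff_left inner_diff_right algebra_simps)
  also have "\<dots> \<le> norm (u1 - u2) * norm (g1 - g2)" by (rule norm_cauchy_schwarz)
  finally have "mA * (norm (u1 - u2))\<^sup>2 \<le> norm (u1 - u2) * norm (g1 - g2)"
    using A_strong[of u1 u2] by (simp add: inner_commute)
  then have h: "(mA * norm (u1 - u2)) * norm (u1 - u2) \<le> norm (g1 - g2) * norm (u1 - u2)"
    by (simp add: power2_eq_square algebra_simps)
  show ?thesis
  proof (cases "norm (u1 - u2) = 0")
    case True then show ?thesis using mA by simp
  next
    case False then have "norm (u1 - u2) > 0" by simp
    then show ?thesis using mult_right_le_imp_le[OF h] by simp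
  qed
qed

lemma pw_exists:
  fixes K :: "'b::{real_inner,complete_space} set" and A :: "'b \<Rightarrow> 'b"
  assumes K_ne: "K \<noteq> {}" and K_closed: "closed K" and K_convex: "convex K" and K_cone: "cone K"
    and Cne: "Cs K j \<noteq> {}"
    and mA: "mA > 0" and LA: "LA > 0"
    and A_strong: "\<And>u v. inner (A u - A v) (u - v) \<ge> mA * (norm (u - v))\<^sup>2"
    and A_lip: "\<And>u v. norm (A u - A v) \<le> LA * norm (u - v)"
  shows "\<exists>u. Sol K j A g u"
proof -
  define Ai where "Ai y = (SOME x. A x = y)" for y
  have AAi: "A (Ai y) = y" for y
    unfolding Ai_def by (rule someI_ex) (rule strong_surj[OF mA LA A_strong A_lip])
  define F where "F \<eta> = - Ai (g - \<eta>)" for \<eta>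
  have key: "mA * (norm (x2 - x1))\<^sup>2 \<le> inner (x2 - x1) (A x2 - A x1)" for x1 x2
    using A_strong[of x2 x1] by (simp add: inner_commute)
  have Fs: "inner (F a - F b) (a - b) \<ge> (mA / LA\<^sup>2) * (norm (a - b))\<^sup>2" for a b
  proof -
    define x1 where "x1 = Ai (g - a)"
    define x2 where "x2 = Ai (g - b)"
    have ab: "a - b = A x2 - A x1" using AAi unfolding x1_def x2_def by (simp add: algebra_simps)
    have Fab: "F a - F b = x2 - x1" unfolding F_def x1_def x2_def by simp
    have "norm (a - b) \<le> LA * norm (x2 - x1)" using A_lip[of x2 x1] ab by simp
    then have "(norm (a - b))\<^sup>2 \<le> (LA * norm (x2 - x1))\<^sup>2" by (intro power_mono) auto
    then have "(norm (a - b))\<^sup>2 \<le> LA\<^sup>2 * (norm (x2 - x1))\<^sup>2" by (simp add: power_mult_distrib)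
    then have "(mA / LA\<^sup>2) * (norm (a - b))\<^sup>2 \<le> (mA / LA\<^sup>2) * (LA\<^sup>2 * (norm (x2 - x1))\<^sup>2)"
      using mA LA by (intro mult_left_mono) auto
    also have "\<dots> = mA * (norm (x2 - x1))\<^sup>2" using LA by simp
    also have "\<dots> \<le> inner (x2 - x1) (A x2 - A x1)" by (rule key)
    finally show ?thesis unfolding Fab ab .
  qed
  have Fl: "norm (F a - F b) \<le> (1 / mA) * norm (a - b)" for a b
  proof -
    define x1 where "x1 = Ai (g - a)"
    define x2 where "x2 = Ai (g - b)"
    have ab: "a - b = A x2 - A x1" using AAi unfolding x1_def x2_def by (simp add: algebra_simps)
    have Fab: "F a - F b = x2 - x1" unfolding F_def x1_def x2_def by simp
    have "mA * (norm (x2 - x1))\<^sup>2 \<le> norm (x2 - x1) * norm (a - b)"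
      using key[of x2 x1] norm_cauchy_schwarz[of "x2 - x1" "A x2 - A x1"] ab by simp
    then have h: "(mA * norm (x2 - x1)) * norm (x2 - x1) \<le> norm (a - b) * norm (x2 - x1)"
      by (simp add: power2_eq_square algebra_simps)
    have "mA * norm (x2 - x1) \<le> norm (a - b)"
    proof (cases "norm (x2 - x1) = 0")
      case True then show ?thesis by simp
    next
      case False then have "norm (x2 - x1) > 0" by simp
      then show ?thesis using mult_right_le_imp_le[OF h] by simp
    qed
    then show ?thesis unfolding Fab using mA by (simp add: field_simps)
  qed
  have m'0: "mA / LA\<^sup>2 > 0" using mA LA by simp
  have L'0: "1 / mA > 0" using mA by simp
  obtain \<eta> where \<eta>C: "\<eta> \<in> Cs K j" and vi: "\<And>\<xi>. \<xi> \<in> Cs K j \<Longrightarrow> inner (F \<eta>) (\<xi> - \<eta>) \<ge> 0"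
    using VI_exists[OF Cs_closed Cs_convex Cne m'0 L'0 Fs Fl] by blast
  define u where "u = Ai (g - \<eta>)"
  have Au: "g - A u = \<eta>" unfolding u_def using AAi by simp
  have nc: "\<forall>\<xi>\<in>Cs K j. inner u (\<xi> - \<eta>) \<le> 0"
    using vi unfolding F_def u_def by (simp add: inner_minus_left)
  have "u \<in> K" by (rule in_K[OF K_ne K_closed K_convex K_cone \<eta>C nc])
  then show ?thesis using \<eta>C nc Au unfolding Sol_def by auto
qed

lemma NC_iff:
  "(- u \<in> NormalCone (Ct K j f t) w) \<longleftrightarrow> (f t - w \<in> Cs K j \<and> (\<forall>\<xi>\<in>Cs K j. inner u (\<xi> - (f t - w)) \<le> 0))"
proof -
  have mem: "w \<in> Ct K j f t \<longleftrightarrow> f t - w \<in> Cs K j"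
  proof
    assume "w \<in> Ct K j f t"
    then obtain \<xi> where "\<xi> \<in> Cs K j" "w = f t - \<xi>" unfolding Ct_def Cset_eq by auto
    then show "f t - w \<in> Cs K j" by simp
  next
    assume h: "f t - w \<in> Cs K j"
    have "w = f t - (f t - w)" by simp
    then show "w \<in> Ct K j f t" unfolding Ct_def Cset_eq using h by (rule image_eqI)
  qed
  have "(\<forall>z\<in>Ct K j f t. inner (- u) (z - w) \<le> 0) \<longleftrightarrow> (\<forall>\<xi>\<in>Cs K j. inner u (\<xi> - (f t - w)) \<le> 0)"
  proof -
    have eq: "inner (- u) ((f t - \<xi>) - w) = inner u (\<xi> - (f t - w))" for \<xi>
      by (simp add: inner_diff_right algebra_simps)
    have "(\<forall>z\<in>Ct K j f t. inner (- u) (z - w) \<le> 0) \<longleftrightarrow> (\<forall>\<xi>\<in>Cs K j. inner (- u) ((f t - \<xi>) - w) \<le> 0)"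
      unfolding Ct_def Cset_eq by blast
    also have "\<dots> \<longleftrightarrow> (\<forall>\<xi>\<in>Cs K j. inner u (\<xi> - (f t - w)) \<le> 0)" by (simp only: eq)
    finally show ?thesis .
  qed
  then show ?thesis using mem unfolding NormalCone_def by auto
qed

lemma NC_Sol:
  "(u t \<in> K \<and> - u t \<in> NormalCone (Ct K j f t) (A (u t) + s)) \<longleftrightarrow> Sol K j A (f t - s) (u t)"
  unfolding NC_iff Sol_def by (simp add: algebra_simps)


lemma poly_has_integral:
  fixes s M c :: real
  assumes "0 \<le> s"
  shows "((\<lambda>r. M * c^n * r^n / fact n) has_integral (M * c^n * s^(Suc n) / fact (Suc n))) {0..s}"
proof -
  define F where "F r = M * c^n * r^(Suc n) / fact (Suc n)" for r :: real
  have "(F has_vector_derivative (M * c^n * x^n / fact n)) (at x within {0..s})" for x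
  proof -
    have "(F has_real_derivative (M * c^n * (real (Suc n) * x^n) / fact (Suc n))) (at x within {0..s})"
      unfolding F_def by (intro derivative_eq_intros) auto
    moreover have "M * c^n * (real (Suc n) * x^n) / fact (Suc n) = M * c^n * x^n / fact n"
      by (simp add: fact_Suc field_simps del: of_nat_Suc)
    ultimately show ?thesis by (simp add: has_real_derivative_iff_has_vector_derivative mult.assoc)
  qed
  then have "((\<lambda>r. M * c^n * r^n / fact n) has_integral (F s - F 0)) {0..s}"
    using assms by (intro fundamental_theorem_of_calculus) auto
  then show ?thesis by (simp add: F_def)
qed

lemma GL:
  fixes d :: "nat \<Rightarrow> real \<Rightarrow> real"
  assumes c: "c \<ge> 0"
    and cont: "\<And>n. continuous_on {0..b} (d n)"
    and d0: "\<And>s. s \<in> {0..b} \<Longrightarrow> d 0 s \<le> M"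
    and dS: "\<And>n s. s \<in> {0..b} \<Longrightarrow> d (Suc n) s \<le> c * integral {0..s} (d n)"
  shows "s \<in> {0..b} \<Longrightarrow> d n s \<le> M * (c * s)^n / fact n"
proof (induction n arbitrary: s)
  case 0
  then show ?case using d0 by simp
next
  case (Suc n)
  have s: "0 \<le> s" "s \<le> b" using Suc.prems by auto
  have sub: "{0..s} \<subseteq> {0..b}" using s by auto
  have "integral {0..s} (d n) \<le> integral {0..s} (\<lambda>r. M * c^n * r^n / fact n)"
  proof (rule integral_le)
    show "d n integrable_on {0..s}"
      by (rule integrable_continuous_interval) (rule continuous_on_subset[OF cont sub])
    show "(\<lambda>r. M * c^n * r^n / fact n) integrable_on {0..s}"
      using poly_has_integral[OF s(1)] by blast
    fix r assume "r \<in> {0..s}"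
    then have "r \<in> {0..b}" using sub by auto
    then show "d n r \<le> M * c^n * r^n / fact n" using Suc.IH by (simp add: power_mult_distrib mult.assoc)
  qed
  also have "\<dots> = M * c^n * s^(Suc n) / fact (Suc n)"
    using poly_has_integral[OF s(1)] by (rule integral_unique)
  finally have "c * integral {0..s} (d n) \<le> c * (M * c^n * s^(Suc n) / fact (Suc n))"
    using c by (rule mult_left_mono)
  also have "\<dots> = M * (c * s)^(Suc n) / fact (Suc n)" by (simp add: power_mult_distrib)
  finally show ?case using dS[OF Suc.prems, of n] by linarith
qed

lemma exp_terms:
  fixes x M :: real
  shows "summable (\<lambda>n. M * x^n / fact n)" and "(\<lambda>n. M * x^n / fact n) \<longlonglongrightarrow> 0"
proof -
  have "summable (\<lambda>n. M * (inverse (fact n) * x^n))" by (intro summable_mult summable_exp)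
  then show s: "summable (\<lambda>n. M * x^n / fact n)" by (simp add: field_simps)
  show "(\<lambda>n. M * x^n / fact n) \<longlonglongrightarrow> 0" by (rule summable_LIMSEQ_zero[OF s])
qed


lemma hist_fix:
  fixes I :: "real set" and T :: real and f :: "real \<Rightarrow> 'a::{real_normed_vector,complete_space}"
    and S :: "(real \<Rightarrow> 'a) \<Rightarrow> (real \<Rightarrow> 'a)" and R :: "'a \<Rightarrow> 'a" and k :: real
  assumes I_def: "(T > 0 \<and> I = {0..T}) \<or> I = {0..}"
    and f_cont: "continuous_on I f"
    and S_maps: "\<And>u. continuous_on I u \<Longrightarrow> continuous_on I (S u)"
    and S_hist: "history_dependent I S"
    and k: "k \<ge> 0"
    and R_lip: "\<And>g1 g2. norm (R g1 - R g2) \<le> k * norm (g1 - g2)"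
  shows "\<exists>u. continuous_on I u \<and> (\<forall>t\<in>I. u t = R (f t - S u t)) \<and>
           (\<forall>v. continuous_on I v \<and> (\<forall>t\<in>I. v t = R (f t - S v t)) \<longrightarrow> (\<forall>t\<in>I. v t = u t))"
proof -
  have Isub: "{0..t} \<subseteq> I" if "t \<in> I" for t using I_def that by auto
  have I0: "0 \<le> t" if "t \<in> I" for t using I_def that by auto
  have hist: "\<exists>L>0. \<forall>u1 u2. continuous_on I u1 \<and> continuous_on I u2 \<longrightarrow>
      (\<forall>t\<in>{0..b}. norm (S u1 t - S u2 t) \<le> L * integral {0..t} (\<lambda>s. norm (u1 s - u2 s)))"
    if "b \<in> I" for b
    using S_hist Isub[OF that] unfolding history_dependent_def by (meson compact_Icc)
  have "k-lipschitz_on UNIV R" by (rule lipschitz_onI) (auto simp: dist_norm R_lip k)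
  then have Rcont: "continuous_on UNIV R" by (rule lipschitz_on_continuous_on)
  define \<Lambda> where "\<Lambda> w = (\<lambda>t. R (f t - S w t))" for w :: "real \<Rightarrow> 'a"
  have \<Lambda>cont: "continuous_on I (\<Lambda> w)" if "continuous_on I w" for w
    unfolding \<Lambda>_def
    by (rule continuous_on_compose2[OF Rcont]) (auto intro!: continuous_intros f_cont S_maps that)
  have contr: "norm (\<Lambda> w1 t - \<Lambda> w2 t) \<le> k * L * integral {0..t} (\<lambda>s. norm (w1 s - w2 s))"
    if "continuous_on I w1" "continuous_on I w2" "t \<in> {0..b}"
       and hL: "\<forall>u1 u2. continuous_on I u1 \<and> continuous_on I u2 \<longrightarrow>
      (\<forall>t\<in>{0..b}. norm (S u1 t - S u2 t) \<le> L * integral {0..t} (\<lambda>s. norm (u1 s - u2 s)))"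
    for w1 w2 t b L
  proof -
    have "norm (\<Lambda> w1 t - \<Lambda> w2 t) \<le> k * norm ((f t - S w1 t) - (f t - S w2 t))"
      unfolding \<Lambda>_def by (rule R_lip)
    also have "norm ((f t - S w1 t) - (f t - S w2 t)) = norm (S w1 t - S w2 t)"
      by (simp add: norm_minus_commute)
    also have "k * norm (S w1 t - S w2 t) \<le> k * (L * integral {0..t} (\<lambda>s. norm (w1 s - w2 s)))"
    proof -
      have hS: "norm (S w1 t - S w2 t) \<le> L * integral {0..t} (\<lambda>s. norm (w1 s - w2 s))"
        using hL that(1-3) by blast
      show ?thesis using hS k by (rule mult_left_mono)
    qed
    finally show ?thesis by (simp only: mult.assoc)
  qed
  define u where "u n = (\<Lambda> ^^ n) (\<lambda>t. 0)" for n
  have u_Suc: "u (Suc n) = \<Lambda> (u n)" for n by (simp add: u_def)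
  have ucont: "continuous_on I (u n)" for n
  proof (induction n)
    case 0
    have "u 0 = (\<lambda>t. 0)" by (simp add: u_def)
    then show ?case by simp
  next
    case (Suc n)
    then show ?case unfolding u_Suc by (rule \<Lambda>cont)
  qed
  define D where "D n t = u (Suc n) t - u n t" for n t
  have Dcont: "continuous_on I (D n)" for n
  proof -
    have "D n = (\<lambda>t. u (Suc n) t - u n t)" by (simp add: D_def fun_eq_iff)
    then show ?thesis using continuous_on_diff[OF ucont ucont] by simp
  qed
  have bnd: "\<exists>M. \<forall>s\<in>{0..b}. norm (g s) \<le> M" if "continuous_on {0..b} g" for g :: "real \<Rightarrow> 'a" and b
  proof -
    have "compact (g ` {0..b})" by (intro compact_continuous_image that compact_Icc)
    then have "bounded (g ` {0..b})" by (rule compact_imp_bounded)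
    then show ?thesis unfolding Elementary_Metric_Spaces.bounded_iff by blast
  qed
  have Cb: "\<exists>N0. \<forall>N\<ge>N0. \<forall>M\<ge>N. \<forall>t\<in>{0..b}. dist (u N t) (u M t) < e"
    if b: "b \<in> I" and e: "e > 0" for b e
  proof -
    obtain L where L: "L > 0" and hL: "\<forall>u1 u2. continuous_on I u1 \<and> continuous_on I u2 \<longrightarrow>
      (\<forall>t\<in>{0..b}. norm (S u1 t - S u2 t) \<le> L * integral {0..t} (\<lambda>s. norm (u1 s - u2 s)))"
      using hist[OF b] by blast
    define c where "c = k * L"
    have c0: "c \<ge> 0" using k L by (simp add: c_def)
    have sub: "{0..b} \<subseteq> I" by (rule Isub[OF b])
    have b0: "0 \<le> b" by (rule I0[OF b])
    obtain M where M: "\<forall>s\<in>{0..b}. norm (D 0 s) \<le> M"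
      using bnd[OF continuous_on_subset[OF Dcont sub]] by blast
    have M0: "M \<ge> 0" using M b0 by (meson atLeastAtMost_iff norm_ge_zero order_trans order_refl)
    have dcont: "continuous_on {0..b} (\<lambda>s. norm (D n s))" for n
      by (intro continuous_on_norm continuous_on_subset[OF Dcont sub])
    have dS: "norm (D (Suc n) s) \<le> c * integral {0..s} (\<lambda>r. norm (D n r))" if "s \<in> {0..b}" for n s
    proof -
      have "D (Suc n) s = \<Lambda> (u (Suc n)) s - \<Lambda> (u n) s" unfolding D_def u_Suc ..
      then have "norm (D (Suc n) s) \<le> k * L * integral {0..s} (\<lambda>r. norm (u (Suc n) r - u n r))"
        using contr[OF ucont ucont that hL] by simp
      then show ?thesis by (simp add: c_def D_def)
    qed
    have GLb: "norm (D n s) \<le> M * (c * s)^n / fact n" if "s \<in> {0..b}" for n s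
      using GL[of c b "\<lambda>n s. norm (D n s)" M, OF c0 dcont _ dS that] M by blast
    define a where "a n = M * (c * b)^n / fact n" for n
    have Mb: "norm (D n s) \<le> a n" if "s \<in> {0..b}" for n s
    proof -
      have "(c * s)^n \<le> (c * b)^n" using that c0 by (intro power_mono mult_left_mono) auto
      then have "M * (c * s)^n / fact n \<le> M * (c * b)^n / fact n"
        using M0 by (intro divide_right_mono mult_left_mono) auto
      then show ?thesis using GLb[OF that, of n] unfolding a_def by linarith
    qed
    have "summable a" unfolding a_def by (rule exp_terms(1))
    then obtain N0 where N0: "\<And>m n. m \<ge> N0 \<Longrightarrow> norm (sum a {m..<n}) < e"
      using e unfolding summable_Cauchy by blast
    have "\<forall>N\<ge>N0. \<forall>M\<ge>N. \<forall>t\<in>{0..b}. dist (u N t) (u M t) < e"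
    proof (intro allI impI ballI)
      fix N M' t assume N: "N0 \<le> N" and M': "N \<le> M'" and t: "t \<in> {0..b}"
      have "u M' t - u N t = (\<Sum>i = N..<M'. D i t)"
        unfolding D_def using sum_Suc_diff'[OF M', of "\<lambda>i. u i t"] by simp
      then have "dist (u N t) (u M' t) = norm (\<Sum>i = N..<M'. D i t)"
        by (simp add: dist_norm norm_minus_commute)
      also have "\<dots> \<le> (\<Sum>i = N..<M'. norm (D i t))" by (rule norm_sum)
      also have "\<dots> \<le> sum a {N..<M'}" using Mb[OF t] by (intro sum_mono) auto
      also have "\<dots> \<le> norm (sum a {N..<M'})" by simp
      also have "\<dots> < e" using N0 N by blast
      finally show "dist (u N t) (u M' t) < e" .
    qed
    then show ?thesis by blast
  qed
  define U where "U t = lim (\<lambda>N. u N t)" for t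
  have Ulim: "(\<lambda>N. u N t) \<longlonglongrightarrow> U t" if t: "t \<in> I" for t
  proof -
    have tt: "t \<in> {0..t}" using I0[OF t] by simp
    have "Cauchy (\<lambda>N. u N t)"
    proof (rule metric_CauchyI)
      fix e :: real assume "e > 0"
      then obtain N0 where "\<forall>N\<ge>N0. \<forall>M\<ge>N. \<forall>s\<in>{0..t}. dist (u N s) (u M s) < e"
        using Cb[OF t] by blast
      then have "\<forall>m\<ge>N0. \<forall>n\<ge>N0. dist (u m t) (u n t) < e"
        using tt by (metis dist_commute nat_le_linear)
      then show "\<exists>M. \<forall>m\<ge>M. \<forall>n\<ge>M. dist (u m t) (u n t) < e" by blast
    qed
    then show ?thesis unfolding U_def by (simp add: Cauchy_convergent_iff convergent_LIMSEQ_iff)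
  qed
  have Uconv: "\<forall>\<^sub>F N in sequentially. \<forall>t\<in>{0..b}. dist (u N t) (U t) < e"
    if b: "b \<in> I" and e: "e > 0" for b e
  proof -
    have e2: "e / 2 > 0" using e by simp
    obtain N0 where N0: "\<forall>N\<ge>N0. \<forall>M\<ge>N. \<forall>t\<in>{0..b}. dist (u N t) (u M t) < e / 2"
      using Cb[OF b e2] by blast
    have "\<forall>N\<ge>N0. \<forall>t\<in>{0..b}. dist (u N t) (U t) < e"
    proof (intro allI impI ballI)
      fix N t assume N: "N0 \<le> N" and t: "t \<in> {0..b}"
      have tI: "t \<in> I" using t Isub[OF b] by auto
      have "(\<lambda>M. dist (u N t) (u M t)) \<longlonglongrightarrow> dist (u N t) (U t)"
        by (intro tendsto_intros Ulim[OF tI])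
      moreover have "\<exists>N'. \<forall>M\<ge>N'. dist (u N t) (u M t) \<le> e / 2"
        using N0 N t by (meson less_imp_le)
      ultimately have "dist (u N t) (U t) \<le> e / 2" by (rule LIMSEQ_le_const2)
      then show "dist (u N t) (U t) < e" using e by simp
    qed
    then show ?thesis unfolding eventually_sequentially by blast
  qed
  have Ucont_b: "continuous_on {0..b} U" if b: "b \<in> I" for b
  proof (rule uniform_limit_theorem)
    have sub: "{0..b} \<subseteq> I" by (rule Isub[OF b])
    show "\<forall>\<^sub>F N in sequentially. continuous_on {0..b} (u N)"
      by (intro always_eventually allI continuous_on_subset[OF ucont sub])
    show "uniform_limit {0..b} u U sequentially"
      by (rule uniform_limitI) (rule Uconv[OF b])
  qed simp
  have Ucont: "continuous_on I U"
    using I_def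
  proof
    assume "T > 0 \<and> I = {0..T}"
    then show ?thesis using Ucont_b[of T] by auto
  next
    assume I: "I = {0..}"
    show ?thesis
      unfolding continuous_on_eq_continuous_within
    proof
      fix x assume x: "x \<in> I"
      have "x + 1 \<in> I" using x I by auto
      then have "continuous_on {0..x+1} U" by (rule Ucont_b)
      then have "continuous (at x within {0..x+1}) U"
        using x I by (simp add: continuous_on_eq_continuous_within)
      moreover have "at x within I = at x within {0..x+1}"
        by (rule at_within_nhd[where S="{..<x+1}"]) (use x I in auto)
      ultimately show "continuous (at x within I) U" by simp
    qed
  qed
  have fixU: "U t = \<Lambda> U t" if t: "t \<in> I" for t
  proof -
    obtain L where L: "L > 0" and hL: "\<forall>u1 u2. continuous_on I u1 \<and> continuous_on I u2 \<longrightarrow>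
      (\<forall>s\<in>{0..t}. norm (S u1 s - S u2 s) \<le> L * integral {0..s} (\<lambda>r. norm (u1 r - u2 r)))"
      using hist[OF t] by blast
    have t0: "0 \<le> t" by (rule I0[OF t])
    have sub: "{0..t} \<subseteq> I" by (rule Isub[OF t])
    have tt: "t \<in> {0..t}" using t0 by simp
    have "(\<lambda>N. u N t) \<longlonglongrightarrow> U t"
      unfolding tendsto_iff
    proof (intro allI impI)
      fix e :: real assume "e > 0"
      from Uconv[OF t this] show "\<forall>\<^sub>F N in sequentially. dist (u N t) (U t) < e"
        by eventually_elim (use tt in blast)
    qed
    then have l1: "(\<lambda>N. u (Suc N) t) \<longlonglongrightarrow> U t" by (rule LIMSEQ_Suc)
    have l2: "(\<lambda>N. u (Suc N) t) \<longlonglongrightarrow> \<Lambda> U t"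
      unfolding tendsto_iff
    proof (intro allI impI)
      fix e :: real assume e: "e > 0"
      define K where "K = k * L * t"
      have K0: "K \<ge> 0" using k L t0 by (simp add: K_def)
      define e' where "e' = e / (K + 1)"
      have e': "e' > 0" using e K0 by (simp add: e'_def)
      have Ke: "K * e' < e"
      proof -
        have "K * e' = e * (K / (K + 1))" by (simp add: e'_def)
        also have "\<dots> < e * 1" using e K0 by (intro mult_strict_left_mono) auto
        finally show ?thesis by simp
      qed
      from Uconv[OF t e'] show "\<forall>\<^sub>F N in sequentially. dist (u (Suc N) t) (\<Lambda> U t) < e"
      proof eventually_elim
        case (elim N)
        have int_le: "integral {0..t} (\<lambda>s. norm (u N s - U s)) \<le> integral {0..t} (\<lambda>s. e')"
        proof (rule integral_le)
          show "(\<lambda>s. norm (u N s - U s)) integrable_on {0..t}"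
            by (intro integrable_continuous_interval continuous_intros continuous_on_subset[OF ucont sub]
                continuous_on_subset[OF Ucont sub])
          show "(\<lambda>s. e') integrable_on {0..t}" by (intro integrable_continuous_interval continuous_on_const)
          fix s assume "s \<in> {0..t}"
          then show "norm (u N s - U s) \<le> e'" using elim by (auto simp: dist_norm less_imp_le)
        qed
        have "dist (u (Suc N) t) (\<Lambda> U t) = norm (\<Lambda> (u N) t - \<Lambda> U t)" by (simp add: u_Suc dist_norm)
        also have "\<dots> \<le> k * L * integral {0..t} (\<lambda>s. norm (u N s - U s))"
          by (rule contr[OF ucont Ucont tt hL])
        also have "\<dots> \<le> k * L * integral {0..t} (\<lambda>s. e')"
          using int_le k L by (intro mult_left_mono) auto
        also have "\<dots> = K * e'" using t0 by (simp add: K_def)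
        also have "\<dots> < e" by (rule Ke)
        finally show ?case .
      qed
    qed
    show ?thesis using LIMSEQ_unique[OF l1 l2] .
  qed
  have uniq: "v t = U t" if v: "continuous_on I v" "\<forall>t\<in>I. v t = \<Lambda> v t" and t: "t \<in> I" for v t
  proof -
    obtain L where L: "L > 0" and hL: "\<forall>u1 u2. continuous_on I u1 \<and> continuous_on I u2 \<longrightarrow>
      (\<forall>s\<in>{0..t}. norm (S u1 s - S u2 s) \<le> L * integral {0..s} (\<lambda>r. norm (u1 r - u2 r)))"
      using hist[OF t] by blast
    define c where "c = k * L"
    have c0: "c \<ge> 0" using k L by (simp add: c_def)
    have t0: "0 \<le> t" by (rule I0[OF t])
    have sub: "{0..t} \<subseteq> I" by (rule Isub[OF t])
    have tt: "t \<in> {0..t}" using t0 by simp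
    have dc: "continuous_on {0..t} (\<lambda>s. v s - U s)"
      by (intro continuous_intros continuous_on_subset[OF v(1) sub] continuous_on_subset[OF Ucont sub])
    obtain M where M: "\<forall>s\<in>{0..t}. norm (v s - U s) \<le> M" using bnd[OF dc] by blast
    have dS: "norm (v s - U s) \<le> c * integral {0..s} (\<lambda>r. norm (v r - U r))" if s: "s \<in> {0..t}" for s
    proof -
      have "s \<in> I" using s sub by auto
      then have "v s - U s = \<Lambda> v s - \<Lambda> U s" using v(2) fixU by metis
      then show ?thesis using contr[OF v(1) Ucont s hL] by (simp add: c_def)
    qed
    have "norm (v t - U t) \<le> M * (c * t)^n / fact n" for n
    proof -
      have dcn: "continuous_on {0..t} (\<lambda>s. norm (v s - U s))" using continuous_on_norm[OF dc] .
      show ?thesis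
        using GL[of c t "\<lambda>n s. norm (v s - U s)" M, OF c0 dcn _ _ tt] M dS by blast
    qed
    then have "norm (v t - U t) \<le> 0"
      by (intro LIMSEQ_le_const[OF exp_terms(2)[of M "c * t"]]) auto
    then show ?thesis by simp
  qed
  show ?thesis
  proof (intro exI conjI allI impI ballI)
    show "continuous_on I U" by (rule Ucont)
  next
    fix t assume "t \<in> I" then show "U t = R (f t - S U t)" using fixU unfolding \<Lambda>_def by blast
  next
    fix v t assume h: "continuous_on I v \<and> (\<forall>t\<in>I. v t = R (f t - S v t))" and t: "t \<in> I"
    show "v t = U t" using uniq[of v t] h t unfolding \<Lambda>_def by blast
  qed
qed


theorem corollary3p3:
  fixes I :: "real set" and T :: real
    and K :: "'a::{real_inner, complete_space} set"
    and A :: "'a \<Rightarrow> 'a" and mA LA :: real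
    and f :: "real \<Rightarrow> 'a"
    and S :: "(real \<Rightarrow> 'a) \<Rightarrow> (real \<Rightarrow> 'a)"
    and j :: "'a \<Rightarrow> real"
  assumes I_def: "(T > 0 \<and> I = {0..T}) \<or> I = {0..}"
    and K_ne: "K \<noteq> {}" and K_closed: "closed K" and K_convex: "convex K" and K_cone: "cone K"
    and mA_pos: "mA > 0" and LA_pos: "LA > 0"
    and A_strong: "\<And>u v. inner (A u - A v) (u - v) \<ge> mA * (norm (u - v))\<^sup>2"
    and A_lip: "\<And>u v. norm (A u - A v) \<le> LA * norm (u - v)"
    and f_cont: "continuous_on I f"
    and S_maps: "\<And>u. continuous_on I u \<Longrightarrow> continuous_on I (S u)"
    and S_hist: "history_dependent I S"
    and j_convex: "convex_on K j"
    and j_hom: "\<And>c v. c > 0 \<Longrightarrow> v \<in> K \<Longrightarrow> j (c *\<^sub>R v) = c * j v"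
    and j_lip: "\<exists>L. L-lipschitz_on K j"
  shows "\<exists>u. continuous_on I u \<and> (\<forall>t\<in>I. u t \<in> K) \<and>
            (\<forall>t\<in>I. - u t \<in> NormalCone (Ct K j f t) (A (u t) + S u t)) \<and>
            (\<forall>v. continuous_on I v \<and> (\<forall>t\<in>I. v t \<in> K) \<and>
                 (\<forall>t\<in>I. - v t \<in> NormalCone (Ct K j f t) (A (v t) + S v t))
                 \<longrightarrow> (\<forall>t\<in>I. v t = u t))"
proof -
  obtain Lj where "Lj-lipschitz_on K j" using j_lip by blast
  then have j_cont: "continuous_on K j" by (rule lipschitz_on_continuous_on)
  have Cne: "Cs K j \<noteq> {}"
    by (rule Cs_nonempty[OF K_ne K_closed K_convex K_cone j_convex j_hom j_cont])
  define R where "R g = (SOME u. Sol K j A g u)" for g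
  have RSol: "Sol K j A g (R g)" for g
    unfolding R_def by (rule someI_ex) (rule pw_exists[OF K_ne K_closed K_convex K_cone Cne mA_pos LA_pos A_strong A_lip])
  have R_lip: "norm (R g1 - R g2) \<le> (1 / mA) * norm (g1 - g2)" for g1 g2
    using pw_lip[OF mA_pos A_strong RSol RSol, of g1 g2] mA_pos by (simp add: field_simps)
  have R_uniq: "u = R g" if "Sol K j A g u" for g u
  proof -
    have "mA * norm (u - R g) \<le> 0" using pw_lip[OF mA_pos A_strong that RSol, of g] by simp
    then have "norm (u - R g) \<le> 0" using mA_pos by (simp add: mult_le_0_iff)
    then show ?thesis by simp
  qed
  have k: "1 / mA \<ge> 0" using mA_pos by simp
  obtain U where Uc: "continuous_on I U" and Ufix: "\<forall>t\<in>I. U t = R (f t - S U t)"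
    and Uuniq: "\<And>v. continuous_on I v \<and> (\<forall>t\<in>I. v t = R (f t - S v t)) \<Longrightarrow> (\<forall>t\<in>I. v t = U t)"
  proof -
    have "\<exists>u. continuous_on I u \<and> (\<forall>t\<in>I. u t = R (f t - S u t)) \<and>
           (\<forall>v. continuous_on I v \<and> (\<forall>t\<in>I. v t = R (f t - S v t)) \<longrightarrow> (\<forall>t\<in>I. v t = u t))"
      by (rule hist_fix[where k="1/mA"]) (fact I_def f_cont S_maps S_hist k R_lip)+
    then show ?thesis using that by blast
  qed
  have USol: "Sol K j A (f t - S U t) (U t)" if "t \<in> I" for t
    using Ufix RSol that by metis
  show ?thesis
  proof (intro exI conjI allI impI ballI)
    show "continuous_on I U" by (rule Uc)
  next
    fix t assume "t \<in> I" then show "U t \<in> K" using USol unfolding Sol_def by blast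
  next
    fix t assume "t \<in> I" then show "- U t \<in> NormalCone (Ct K j f t) (A (U t) + S U t)"
      using USol NC_Sol[of U t K j f A "S U t"] by blast
  next
    fix v t
    assume h: "continuous_on I v \<and> (\<forall>t\<in>I. v t \<in> K) \<and>
                 (\<forall>t\<in>I. - v t \<in> NormalCone (Ct K j f t) (A (v t) + S v t))" and t: "t \<in> I"
    have "\<forall>t\<in>I. v t = R (f t - S v t)"
    proof
      fix s assume s: "s \<in> I"
      have "Sol K j A (f s - S v s) (v s)" using h s NC_Sol[of v s K j f A "S v s"] by blast
      then show "v s = R (f s - S v s)" by (rule R_uniq)
    qed
    then show "v t = U t" using Uuniq[of v] h t by blast
  qed
qed

end
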